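(* Let $\mathbb{K}$ be an algebraically closed field with $\operatorname{char}(\mathbb{K})\neq 2$, and let $q\in\mathbb{K}^{\times}=\mathbb{K}\setminus\{0\}$. Let \[ A=\frac{\mathbb{K}\langle x_1,x_2,x_3,x_4\rangle}{\langle g_1,\ldots,g_6\rangle}, \] where \[ g_1=x_1x_2-x_2x_1,\quad g_2=x_3x_2-x_2x_3,\quad g_3=x_1x_3-x_3x_1, \] \[ g_4=x_4x_1-x_1x_4+q(x_4x_3-x_1x_2),\quad g_5=x_4x_2-x_2x_4,\quad g_6=x_4x_3-x_3x_4. \] Then the point scheme of $A$ is $\mathcal{V}\big(x_2(x_1x_2-x_3x_4),\,x_3(x_1x_2-x_3x_4)\big)\subset\mathbb{P}^3$, which contains the double line $\mathcal{V}(x_2,x_3)$.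
   Context: Point scheme: for a quadratic algebra $A=\mathbb{K}\langle x_1,\dots,x_4\rangle/\langle g_1,\dots,g_6\rangle$ with each $g_i=\sum_{j,k}c_{ijk}x_jx_k$ homogeneous of degree 2, let $D$ be the $6\times 4$ matrix with entries $D_{ik}=\sum_j c_{ijk}x_j$ (linear forms in $x_1,\dots,x_4$), so that $g_i(\alpha,\beta):=\sum_{j,k}c_{ijk}\alpha_j\beta_k=(D(\alpha)\beta)_i$ for $(\alpha,\beta)\in\mathbb{P}^3\times\mathbb{P}^3$. The point scheme of $A$ is the subscheme of $\mathbb{P}^3$ (homogeneous coordinates $x_1,\dots,x_4$) defined by the vanishing of all $4\times 4$ minors of $D$; its points are the $\alpha\in\mathbb{P}^3$ for which there exists $\beta\in\mathbb{P}^3$ with $g_i(\alpha,\beta)=0$ for all $i$. For homogeneous polynomials $f_1,\dots,f_r$, $\mathcal{V}(f_1,\dots,f_r)$ denotes their zero locus (subscheme) in $\mathbb{P}^3$. *)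

theory Defs
  imports "HOL-Library.Poly_Mapping" "HOL-Combinatorics.Permutations"
          "HOL-Computational_Algebra.Polynomial"
begin

type_synonym 'k mpoly = "(nat \<Rightarrow>\<^sub>0 nat) \<Rightarrow>\<^sub>0 'k"

definition Var :: "nat \<Rightarrow> 'k::comm_ring_1 mpoly" where
  "Var j = Poly_Mapping.single (Poly_Mapping.single j 1) 1"

definition Const :: "'k::comm_ring_1 \<Rightarrow> 'k mpoly" where
  "Const c = Poly_Mapping.single 0 c"

definition ideal_gen :: "'k::comm_ring_1 mpoly set \<Rightarrow> 'k mpoly set" where
  "ideal_gen S = {f. \<exists>T a. finite T \<and> T \<subseteq> S \<and> f = (\<Sum>s\<in>T. a s * s)}"

definition saturation :: "'k::comm_ring_1 mpoly set \<Rightarrow> 'k mpoly set" where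
  "saturation I = {f. \<exists>N. \<forall>j\<in>{1..4}. Var j ^ N * f \<in> I}"

text \<open>The closed subscheme V(S) of P^3 is represented by its saturated ideal;
  two sets of homogeneous polynomials define the same subscheme iff these agree,
  and V(S) \<subseteq> V(T) as subschemes iff Vsch T \<subseteq> Vsch S.\<close>
definition Vsch :: "'k::comm_ring_1 mpoly set \<Rightarrow> 'k mpoly set" where
  "Vsch S = saturation (ideal_gen S)"

text \<open>c i j k is the coefficient of x_j x_k in g_i (i \<in> {1..6}, j,k \<in> {1..4}).\<close>
definition Dmat :: "(nat \<Rightarrow> nat \<Rightarrow> nat \<Rightarrow> 'k::comm_ring_1) \<Rightarrow> nat \<Rightarrow> nat \<Rightarrow> 'k mpoly" where
  "Dmat c i k = (\<Sum>j\<in>{1..4}. Const (c i j k) * Var j)"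

definition det4 :: "(nat \<Rightarrow> nat \<Rightarrow> 'a::comm_ring_1) \<Rightarrow> 'a" where
  "det4 M = (\<Sum>p | p permutes {1..4}. of_int (sign p) * (\<Prod>i\<in>{1..4}. M i (p i)))"

definition minors4 :: "(nat \<Rightarrow> nat \<Rightarrow> nat \<Rightarrow> 'k::comm_ring_1) \<Rightarrow> 'k mpoly set" where
  "minors4 c = {det4 (\<lambda>a b. Dmat c (r a) b) | r.
      (\<forall>a\<in>{1..4}. r a \<in> {1..6}) \<and>
      (\<forall>a\<in>{1..4}. \<forall>b\<in>{1..4}. a < b \<longrightarrow> r a < r b)}"

definition point_scheme :: "(nat \<Rightarrow> nat \<Rightarrow> nat \<Rightarrow> 'k::comm_ring_1) \<Rightarrow> 'k mpoly set" where
  "point_scheme c = Vsch (minors4 c)"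

definition coeffs_A :: "'k::comm_ring_1 \<Rightarrow> nat \<Rightarrow> nat \<Rightarrow> nat \<Rightarrow> 'k" where
  "coeffs_A q i j k =
     (if (i,j,k) = (1,1,2) then 1 else if (i,j,k) = (1,2,1) then -1
      else if (i,j,k) = (2,3,2) then 1 else if (i,j,k) = (2,2,3) then -1
      else if (i,j,k) = (3,1,3) then 1 else if (i,j,k) = (3,3,1) then -1
      else if (i,j,k) = (4,4,1) then 1 else if (i,j,k) = (4,1,4) then -1
      else if (i,j,k) = (4,4,3) then q else if (i,j,k) = (4,1,2) then -q
      else if (i,j,k) = (5,4,2) then 1 else if (i,j,k) = (5,2,4) then -1
      else if (i,j,k) = (6,4,3) then 1 else if (i,j,k) = (6,3,4) then -1
      else 0)"

definition alg_closed_field :: "'k::field itself \<Rightarrow> bool" where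
  "alg_closed_field _ \<longleftrightarrow> (\<forall>p::'k poly. degree p > 0 \<longrightarrow> (\<exists>x. poly p x = 0))"

end

theory Submission
  imports Defs
begin
lemma sign_tc: "permutation q \<Longrightarrow> sign (transpose a b \<circ> q) = (if a = b then 1 else -1) * sign q"
  by (simp add: sign_compose sign_swap_id permutation_swap_id)
lemma perm_tc: "permutation q \<Longrightarrow> permutation (transpose a b \<circ> q)"
  by (simp add: permutation_compose permutation_swap_id)

lemma det4_expand: "det4 M =
  M 1 1 * M 2 2 * M 3 3 * M 4 4 - M 1 1 * M 2 2 * M 3 4 * M 4 3
 - M 1 1 * M 2 3 * M 3 2 * M 4 4 + M 1 1 * M 2 3 * M 3 4 * M 4 2
 + M 1 1 * M 2 4 * M 3 2 * M 4 3 - M 1 1 * M 2 4 * M 3 3 * M 4 2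
 - M 1 2 * M 2 1 * M 3 3 * M 4 4 + M 1 2 * M 2 1 * M 3 4 * M 4 3
 + M 1 2 * M 2 3 * M 3 1 * M 4 4 - M 1 2 * M 2 3 * M 3 4 * M 4 1
 - M 1 2 * M 2 4 * M 3 1 * M 4 3 + M 1 2 * M 2 4 * M 3 3 * M 4 1
 + M 1 3 * M 2 1 * M 3 2 * M 4 4 - M 1 3 * M 2 1 * M 3 4 * M 4 2
 - M 1 3 * M 2 2 * M 3 1 * M 4 4 + M 1 3 * M 2 2 * M 3 4 * M 4 1
 + M 1 3 * M 2 4 * M 3 1 * M 4 2 - M 1 3 * M 2 4 * M 3 2 * M 4 1
 - M 1 4 * M 2 1 * M 3 2 * M 4 3 + M 1 4 * M 2 1 * M 3 3 * M 4 2
 + M 1 4 * M 2 2 * M 3 1 * M 4 3 - M 1 4 * M 2 2 * M 3 3 * M 4 1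
 - M 1 4 * M 2 3 * M 3 1 * M 4 2 + M 1 4 * M 2 3 * M 3 2 * M 4 1"
proof -
  have e: "{1..4::nat} = insert 1 (insert 2 (insert 3 (insert 4 {})))" by auto
  have p4: "{1..4::nat} = {1,2,3,4}" by auto
  show ?thesis
    unfolding det4_def e
    apply (simp add: sum_over_permutations_insert sign_tc perm_tc permutation_swap_id sign_swap_id)
    done
qed

lemma sum4: "(\<Sum>j\<in>{1..4::nat}. f j) = f 1 + f 2 + f 3 + f 4"
proof -
  have e: "{1..4::nat} = insert 1 (insert 2 (insert 3 (insert 4 {})))" by auto
  show ?thesis unfolding e by (simp add: algebra_simps)
qed

lemma ball4: "(\<forall>x\<in>{1..4::nat}. P x) = (P 1 \<and> P 2 \<and> P 3 \<and> P 4)"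
proof -
  have e: "{1..4::nat} = insert 1 (insert 2 (insert 3 (insert 4 {})))" by auto
  show ?thesis unfolding e by simp
qed

lemma Const0[simp]: "Const 0 = 0" by (simp add: Const_def)
lemma Const1[simp]: "Const 1 = 1" by (simp add: Const_def)
lemma Const_uminus: "Const (- c) = - Const c" by (simp add: Const_def single_uminus)
lemma Const_mult: "Const c * Const d = Const (c * d)" by (simp add: Const_def mult_single)

lemma incr_cases:
  fixes a b c d :: nat
  assumes "1 \<le> a" "a < b" "b < c" "c < d" "d \<le> 6"
  shows "(a,b,c,d) \<in> {(1,2,3,4),(1,2,3,5),(1,2,3,6),(1,2,4,5),(1,2,4,6),(1,2,5,6),
    (1,3,4,5),(1,3,4,6),(1,3,5,6),(1,4,5,6),(2,3,4,5),(2,3,4,6),(2,3,5,6),(2,4,5,6),(3,4,5,6)}"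
proof -
  have "a = 1 \<or> a = 2 \<or> a = 3" "b = 2 \<or> b = 3 \<or> b = 4" "c = 3 \<or> c = 4 \<or> c = 5"
       "d = 4 \<or> d = 5 \<or> d = 6" using assms by arith+
  then show ?thesis using assms by (elim disjE; simp)
qed


lemma Dvals:
  fixes q :: "'k::field"
  shows
  "Dmat (coeffs_A q) 1 1 = - Var 2" "Dmat (coeffs_A q) 1 2 = Var 1" "Dmat (coeffs_A q) 1 3 = 0" "Dmat (coeffs_A q) 1 4 = 0"
  "Dmat (coeffs_A q) 2 1 = 0" "Dmat (coeffs_A q) 2 2 = Var 3" "Dmat (coeffs_A q) 2 3 = - Var 2" "Dmat (coeffs_A q) 2 4 = 0"
  "Dmat (coeffs_A q) 3 1 = - Var 3" "Dmat (coeffs_A q) 3 2 = 0" "Dmat (coeffs_A q) 3 3 = Var 1" "Dmat (coeffs_A q) 3 4 = 0"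
  "Dmat (coeffs_A q) 4 1 = Var 4" "Dmat (coeffs_A q) 4 2 = - (Const q * Var 1)" "Dmat (coeffs_A q) 4 3 = Const q * Var 4" "Dmat (coeffs_A q) 4 4 = - Var 1"
  "Dmat (coeffs_A q) 5 1 = 0" "Dmat (coeffs_A q) 5 2 = Var 4" "Dmat (coeffs_A q) 5 3 = 0" "Dmat (coeffs_A q) 5 4 = - Var 2"
  "Dmat (coeffs_A q) 6 1 = 0" "Dmat (coeffs_A q) 6 2 = 0" "Dmat (coeffs_A q) 6 3 = Var 4" "Dmat (coeffs_A q) 6 4 = - Var 3"
  unfolding Dmat_def sum4 by (simp_all add: coeffs_A_def Const_uminus)

lemma m1234:
  fixes q :: "'k::field"
  assumes "r 1 = 1" "r 2 = 2" "r 3 = 3" "r 4 = 4"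
  shows "det4 (\<lambda>x y. Dmat (coeffs_A q) (r x) y) = 0"
  unfolding det4_expand assms Dvals by (simp add: algebra_simps)

lemma m1235:
  fixes q :: "'k::field"
  assumes "r 1 = 1" "r 2 = 2" "r 3 = 3" "r 4 = 5"
  shows "det4 (\<lambda>x y. Dmat (coeffs_A q) (r x) y) = 0"
  unfolding det4_expand assms Dvals by (simp add: algebra_simps)

lemma m1236:
  fixes q :: "'k::field"
  assumes "r 1 = 1" "r 2 = 2" "r 3 = 3" "r 4 = 6"
  shows "det4 (\<lambda>x y. Dmat (coeffs_A q) (r x) y) = 0"
  unfolding det4_expand assms Dvals by (simp add: algebra_simps)

lemma m1256:
  fixes q :: "'k::field"
  assumes "r 1 = 1" "r 2 = 2" "r 3 = 5" "r 4 = 6"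
  shows "det4 (\<lambda>x y. Dmat (coeffs_A q) (r x) y) = 0"
  unfolding det4_expand assms Dvals by (simp add: algebra_simps)

lemma m1356:
  fixes q :: "'k::field"
  assumes "r 1 = 1" "r 2 = 3" "r 3 = 5" "r 4 = 6"
  shows "det4 (\<lambda>x y. Dmat (coeffs_A q) (r x) y) = 0"
  unfolding det4_expand assms Dvals by (simp add: algebra_simps)

lemma m2356:
  fixes q :: "'k::field"
  assumes "r 1 = 2" "r 2 = 3" "r 3 = 5" "r 4 = 6"
  shows "det4 (\<lambda>x y. Dmat (coeffs_A q) (r x) y) = 0"
  unfolding det4_expand assms Dvals by (simp add: algebra_simps)

lemma m2456:
  fixes q :: "'k::field"
  assumes "r 1 = 2" "r 2 = 4" "r 3 = 5" "r 4 = 6"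
  shows "det4 (\<lambda>x y. Dmat (coeffs_A q) (r x) y) = 0"
  unfolding det4_expand assms Dvals by (simp add: algebra_simps)

lemma m1245:
  fixes q :: "'k::field"
  assumes "r 1 = 1" "r 2 = 2" "r 3 = 4" "r 4 = 5"
  shows "det4 (\<lambda>x y. Dmat (coeffs_A q) (r x) y) = - (Const q * (Var 2 * (Var 2 * (Var 1 * Var 2 - Var 3 * Var 4))))"
  unfolding det4_expand assms Dvals by (simp add: algebra_simps)

lemma m1246:
  fixes q :: "'k::field"
  assumes "r 1 = 1" "r 2 = 2" "r 3 = 4" "r 4 = 6"
  shows "det4 (\<lambda>x y. Dmat (coeffs_A q) (r x) y) = - (Const q * (Var 3 * (Var 2 * (Var 1 * Var 2 - Var 3 * Var 4))))"
  unfolding det4_expand assms Dvals by (simp add: algebra_simps)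

lemma m1345:
  fixes q :: "'k::field"
  assumes "r 1 = 1" "r 2 = 3" "r 3 = 4" "r 4 = 5"
  shows "det4 (\<lambda>x y. Dmat (coeffs_A q) (r x) y) = Const q * (Var 1 * (Var 2 * (Var 1 * Var 2 - Var 3 * Var 4)))"
  unfolding det4_expand assms Dvals by (simp add: algebra_simps)

lemma m1346:
  fixes q :: "'k::field"
  assumes "r 1 = 1" "r 2 = 3" "r 3 = 4" "r 4 = 6"
  shows "det4 (\<lambda>x y. Dmat (coeffs_A q) (r x) y) = Const q * (Var 1 * (Var 3 * (Var 1 * Var 2 - Var 3 * Var 4)))"
  unfolding det4_expand assms Dvals by (simp add: algebra_simps)

lemma m1456:
  fixes q :: "'k::field"
  assumes "r 1 = 1" "r 2 = 4" "r 3 = 5" "r 4 = 6"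
  shows "det4 (\<lambda>x y. Dmat (coeffs_A q) (r x) y) = Const q * (Var 4 * (Var 2 * (Var 1 * Var 2 - Var 3 * Var 4)))"
  unfolding det4_expand assms Dvals by (simp add: algebra_simps)

lemma m2345:
  fixes q :: "'k::field"
  assumes "r 1 = 2" "r 2 = 3" "r 3 = 4" "r 4 = 5"
  shows "det4 (\<lambda>x y. Dmat (coeffs_A q) (r x) y) = Const q * (Var 3 * (Var 2 * (Var 1 * Var 2 - Var 3 * Var 4)))"
  unfolding det4_expand assms Dvals by (simp add: algebra_simps)

lemma m2346:
  fixes q :: "'k::field"
  assumes "r 1 = 2" "r 2 = 3" "r 3 = 4" "r 4 = 6"
  shows "det4 (\<lambda>x y. Dmat (coeffs_A q) (r x) y) = Const q * (Var 3 * (Var 3 * (Var 1 * Var 2 - Var 3 * Var 4)))"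
  unfolding det4_expand assms Dvals by (simp add: algebra_simps)

lemma m3456:
  fixes q :: "'k::field"
  assumes "r 1 = 3" "r 2 = 4" "r 3 = 5" "r 4 = 6"
  shows "det4 (\<lambda>x y. Dmat (coeffs_A q) (r x) y) = Const q * (Var 4 * (Var 3 * (Var 1 * Var 2 - Var 3 * Var 4)))"
  unfolding det4_expand assms Dvals by (simp add: algebra_simps)

lemma igI: "finite T \<Longrightarrow> T \<subseteq> S \<Longrightarrow> f = (\<Sum>s\<in>T. a s * s) \<Longrightarrow> f \<in> ideal_gen S"
  unfolding ideal_gen_def by blast

lemma ig_mem: "s \<in> S \<Longrightarrow> a * s \<in> ideal_gen S"
  unfolding ideal_gen_def by (rule CollectI, rule exI[of _ "{s}"], rule exI[of _ "\<lambda>_. a"]) simp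

lemma ig_zero: "0 \<in> ideal_gen S"
  unfolding ideal_gen_def by (rule CollectI, rule exI[of _ "{}"]) simp

lemma ig_mult: "f \<in> ideal_gen S \<Longrightarrow> c * f \<in> ideal_gen S"
proof -
  assume "f \<in> ideal_gen S"
  then obtain T a where T: "finite T" "T \<subseteq> S" "f = (\<Sum>s\<in>T. a s * s)" unfolding ideal_gen_def by blast
  have "c * f = (\<Sum>s\<in>T. (c * a s) * s)" unfolding T(3) by (simp add: sum_distrib_left mult.assoc)
  then show ?thesis by (rule igI[OF T(1) T(2)])
qed

lemma ig_add: "f \<in> ideal_gen S \<Longrightarrow> g \<in> ideal_gen S \<Longrightarrow> f + g \<in> ideal_gen S"
proof -
  assume "f \<in> ideal_gen S" "g \<in> ideal_gen S"
  then obtain T a U b where T: "finite T" "T \<subseteq> S" "f = (\<Sum>s\<in>T. a s * s)"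
    and U: "finite U" "U \<subseteq> S" "g = (\<Sum>s\<in>U. b s * s)" unfolding ideal_gen_def by blast
  define a' where "a' s = (if s \<in> T then a s else 0)" for s
  define b' where "b' s = (if s \<in> U then b s else 0)" for s
  have 1: "f = (\<Sum>s\<in>T \<union> U. a' s * s)"
    unfolding T(3) a'_def using T(1) U(1)
    by (intro sum.mono_neutral_cong_left) auto
  have 2: "g = (\<Sum>s\<in>T \<union> U. b' s * s)"
    unfolding U(3) b'_def using T(1) U(1)
    by (intro sum.mono_neutral_cong_left) auto
  have "f + g = (\<Sum>s\<in>T \<union> U. (a' s + b' s) * s)"
    unfolding 1 2 by (simp add: sum.distrib distrib_right)
  then show ?thesis by (rule igI[rotated 2]) (use T U in auto)
qed

lemma ig_sum: "finite T \<Longrightarrow> (\<And>s. s \<in> T \<Longrightarrow> g s \<in> ideal_gen S) \<Longrightarrow> sum g T \<in> ideal_gen S"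
  by (induction T rule: finite_induct) (auto intro: ig_add ig_zero)

lemma ig_subset: "S \<subseteq> ideal_gen R \<Longrightarrow> ideal_gen S \<subseteq> ideal_gen R"
proof
  fix f assume S: "S \<subseteq> ideal_gen R" and "f \<in> ideal_gen S"
  then obtain T a where T: "finite T" "T \<subseteq> S" "f = (\<Sum>s\<in>T. a s * s)" unfolding ideal_gen_def by blast
  show "f \<in> ideal_gen R" unfolding T(3) using T S by (intro ig_sum ig_mult) auto
qed

lemma ig_var: "(\<And>s. s \<in> S \<Longrightarrow> v * s \<in> ideal_gen R) \<Longrightarrow> f \<in> ideal_gen S \<Longrightarrow> v * f \<in> ideal_gen R"
proof -
  assume S: "\<And>s. s \<in> S \<Longrightarrow> v * s \<in> ideal_gen R" and "f \<in> ideal_gen S"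
  then obtain T a where T: "finite T" "T \<subseteq> S" "f = (\<Sum>s\<in>T. a s * s)" unfolding ideal_gen_def by blast
  have "v * f = (\<Sum>s\<in>T. a s * (v * s))" unfolding T(3) by (simp add: sum_distrib_left algebra_simps)
  also have "\<dots> \<in> ideal_gen R"
    apply (rule ig_sum) using T apply simp apply (rule ig_mult) apply (rule S) using T by auto
  finally show ?thesis .
qed

lemma sat_mono: "I \<subseteq> J \<Longrightarrow> saturation I \<subseteq> saturation J"
  unfolding saturation_def by blast

lemma sat_var: "(\<And>g j. g \<in> I \<Longrightarrow> j \<in> {1..4} \<Longrightarrow> Var j * g \<in> J) \<Longrightarrow> saturation I \<subseteq> saturation J"
proof
  fix f assume H: "\<And>g j. g \<in> I \<Longrightarrow> j \<in> {1..4} \<Longrightarrow> Var j * g \<in> J" and "f \<in> saturation I"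
  then obtain N where N: "\<forall>j\<in>{1..4}. Var j ^ N * f \<in> I" unfolding saturation_def by blast
  have "\<forall>j\<in>{1..4}. Var j ^ Suc N * f \<in> J"
  proof
    fix j :: nat assume j: "j \<in> {1..4}"
    have "Var j ^ Suc N * f = Var j * (Var j ^ N * f)" by (simp add: mult.assoc)
    moreover have "Var j ^ N * f \<in> I" using N j by blast
    ultimately show "Var j ^ Suc N * f \<in> J" using H j by metis
  qed
  then show "f \<in> saturation J" unfolding saturation_def by blast
qed

declare One_nat_def [simp del]

lemma ig_mem2: "s \<in> S \<Longrightarrow> c * (v * s) \<in> ideal_gen S"
  using ig_mem[of s S "c * v"] by (simp add: mult.assoc)
lemma ig_neg2: "s \<in> S \<Longrightarrow> - (c * (v * s)) \<in> ideal_gen S"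
  using ig_mem[of s S "- (c * v)"] by (simp add: mult.assoc)

lemma fwd:
  fixes q :: "'k::field"
  assumes "(r 1, r 2, r 3, r 4) \<in> {(1,2,3,4),(1,2,3,5),(1,2,3,6),(1,2,4,5),(1,2,4,6),(1,2,5,6),(1,3,4,5),(1,3,4,6),(1,3,5,6),(1,4,5,6),(2,3,4,5),(2,3,4,6),(2,3,5,6),(2,4,5,6),(3,4,5,6)}"
  shows "det4 (\<lambda>x y. Dmat (coeffs_A q) (r x) y) \<in> ideal_gen {(Var 2 * (Var 1 * Var 2 - Var 3 * Var 4)), (Var 3 * (Var 1 * Var 2 - Var 3 * Var 4))}"
  using assms
  apply (elim insertE emptyE)
  apply (simp_all only: prod.inject)
  apply (elim conjE; simp add: m1234 m1235 m1236 m1256 m1356 m2356 m2456 m1245 m1246 m1345 m1346 m1456 m2345 m2346 m3456 ig_zero ig_mem2 ig_neg2)+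
  done

definition R :: "nat \<Rightarrow> nat \<Rightarrow> nat \<Rightarrow> nat \<Rightarrow> nat \<Rightarrow> nat" where
  "R a b c d x = (if x = 1 then a else if x = 2 then b else if x = 3 then c else d)"
lemma R_simps[simp]: "R a b c d 1 = a" "R a b c d 2 = b" "R a b c d 3 = c" "R a b c d 4 = d"
  by (simp_all add: R_def)

lemma minor_in:
  assumes "1 \<le> r 1" "r 1 < r 2" "r 2 < r 3" "r 3 < r 4" "r 4 \<le> 6"
  shows "det4 (\<lambda>x y. Dmat cc (r x) y) \<in> minors4 cc"
  unfolding minors4_def
  apply (rule CollectI, rule exI[of _ r])
  using assms by (simp add: ball4)

lemma conv_pos:
  fixes q :: "'k::field"
  assumes "det4 (\<lambda>x y. Dmat (coeffs_A q) (R a b c d x) y) = Const q * X"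
    "1 \<le> a" "a < b" "b < c" "c < d" "d \<le> 6" "q \<noteq> 0"
  shows "X \<in> ideal_gen (minors4 (coeffs_A q))"
proof -
  have "det4 (\<lambda>x y. Dmat (coeffs_A q) (R a b c d x) y) \<in> minors4 (coeffs_A q)"
    by (rule minor_in) (use assms in simp_all)
  then have "Const (inverse q) * det4 (\<lambda>x y. Dmat (coeffs_A q) (R a b c d x) y) \<in> ideal_gen (minors4 (coeffs_A q))"
    by (rule ig_mem)
  also have "Const (inverse q) * det4 (\<lambda>x y. Dmat (coeffs_A q) (R a b c d x) y) = X"
    unfolding assms(1) mult.assoc[symmetric] Const_mult using assms(7) by simp
  finally show ?thesis .
qed

lemma conv_neg:
  fixes q :: "'k::field"
  assumes "det4 (\<lambda>x y. Dmat (coeffs_A q) (R a b c d x) y) = - (Const q * X)"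
    "1 \<le> a" "a < b" "b < c" "c < d" "d \<le> 6" "q \<noteq> 0"
  shows "X \<in> ideal_gen (minors4 (coeffs_A q))"
proof -
  have "det4 (\<lambda>x y. Dmat (coeffs_A q) (R a b c d x) y) \<in> minors4 (coeffs_A q)"
    by (rule minor_in) (use assms in simp_all)
  then have "Const (- inverse q) * det4 (\<lambda>x y. Dmat (coeffs_A q) (R a b c d x) y) \<in> ideal_gen (minors4 (coeffs_A q))"
    by (rule ig_mem)
  also have "Const (- inverse q) * det4 (\<lambda>x y. Dmat (coeffs_A q) (R a b c d x) y) = X"
    unfolding assms(1) mult_minus_right mult.assoc[symmetric] Const_mult using assms(7) by (simp add: Const_uminus)
  finally show ?thesis .
qed

theorem proposition2:
  fixes q :: "'k::field"
  assumes "alg_closed_field TYPE('k)"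
    and "(2::'k) \<noteq> 0"
    and "q \<noteq> 0"
  shows "point_scheme (coeffs_A q) =
           Vsch {Var 2 * (Var 1 * Var 2 - Var 3 * Var 4),
                 Var 3 * (Var 1 * Var 2 - Var 3 * Var 4)}
    \<and> point_scheme (coeffs_A q) \<subseteq> Vsch {Var 2 ^ 2, Var 2 * Var 3, Var 3 ^ 2}"
proof -
  let ?M = "minors4 (coeffs_A q)"
  let ?J = "{(Var 2 * (Var 1 * Var 2 - Var 3 * Var 4)), (Var 3 * (Var 1 * Var 2 - Var 3 * Var 4))}"
  let ?K = "{Var 2 ^ 2, Var 2 * Var 3, Var 3 ^ 2} :: 'k mpoly set"
  have MJ: "?M \<subseteq> ideal_gen ?J"
  proof
    fix f assume "f \<in> ?M"
    then obtain r where f: "f = det4 (\<lambda>a b. Dmat (coeffs_A q) (r a) b)"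
      and r1: "\<forall>a\<in>{1..4}. r a \<in> {1..6}" and r2: "\<forall>a\<in>{1..4}. \<forall>b\<in>{1..4}. a < b \<longrightarrow> r a < r b"
      unfolding minors4_def by blast
    have "(r 1, r 2, r 3, r 4) \<in> {(1,2,3,4),(1,2,3,5),(1,2,3,6),(1,2,4,5),(1,2,4,6),(1,2,5,6),(1,3,4,5),(1,3,4,6),(1,3,5,6),(1,4,5,6),(2,3,4,5),(2,3,4,6),(2,3,5,6),(2,4,5,6),(3,4,5,6)}"
      by (rule incr_cases) (use r1 r2 in \<open>simp_all add: ball4\<close>)
    then show "f \<in> ideal_gen ?J" unfolding f by (rule fwd)
  qed
  have JM: "Var j * g \<in> ideal_gen ?M" if "g \<in> ?J" "j \<in> {1..4}" for g j
  proof -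
    have jj: "j = 1 \<or> j = 2 \<or> j = 3 \<or> j = 4" using that(2) by auto
    have gg: "g = (Var 2 * (Var 1 * Var 2 - Var 3 * Var 4)) \<or> g = (Var 3 * (Var 1 * Var 2 - Var 3 * Var 4))" using that(1) by simp
    have "Var 1 * (Var 2 * (Var 1 * Var 2 - Var 3 * Var 4)) \<in> ideal_gen ?M"
      by (rule conv_pos[where a=1 and b=3 and c=4 and d=5], rule m1345) (use assms(3) in simp_all)
    moreover have "Var 2 * (Var 2 * (Var 1 * Var 2 - Var 3 * Var 4)) \<in> ideal_gen ?M"
      by (rule conv_neg[where a=1 and b=2 and c=4 and d=5], rule m1245) (use assms(3) in simp_all)
    moreover have "Var 3 * (Var 2 * (Var 1 * Var 2 - Var 3 * Var 4)) \<in> ideal_gen ?M"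
      by (rule conv_pos[where a=2 and b=3 and c=4 and d=5], rule m2345) (use assms(3) in simp_all)
    moreover have "Var 4 * (Var 2 * (Var 1 * Var 2 - Var 3 * Var 4)) \<in> ideal_gen ?M"
      by (rule conv_pos[where a=1 and b=4 and c=5 and d=6], rule m1456) (use assms(3) in simp_all)
    moreover have "Var 1 * (Var 3 * (Var 1 * Var 2 - Var 3 * Var 4)) \<in> ideal_gen ?M"
      by (rule conv_pos[where a=1 and b=3 and c=4 and d=6], rule m1346) (use assms(3) in simp_all)
    moreover have "Var 2 * (Var 3 * (Var 1 * Var 2 - Var 3 * Var 4)) \<in> ideal_gen ?M"
    proof -
      have e: "Var 2 * (Var 3 * (Var 1 * Var 2 - Var 3 * Var 4)) = Var 3 * (Var 2 * (Var 1 * Var 2 - Var 3 * Var 4))" by (simp add: algebra_simps)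
      have m: "Var 3 * (Var 2 * (Var 1 * Var 2 - Var 3 * Var 4)) \<in> ideal_gen ?M"
        by (rule conv_pos[where a=2 and b=3 and c=4 and d=5], rule m2345) (use assms(3) in simp_all)
      show ?thesis by (subst e) (rule m)
    qed
    moreover have "Var 3 * (Var 3 * (Var 1 * Var 2 - Var 3 * Var 4)) \<in> ideal_gen ?M"
      by (rule conv_pos[where a=2 and b=3 and c=4 and d=6], rule m2346) (use assms(3) in simp_all)
    moreover have "Var 4 * (Var 3 * (Var 1 * Var 2 - Var 3 * Var 4)) \<in> ideal_gen ?M"
      by (rule conv_pos[where a=3 and b=4 and c=5 and d=6], rule m3456) (use assms(3) in simp_all)
    ultimately show ?thesis using jj gg by (elim disjE) simp_all
  qed
  have JK: "?J \<subseteq> ideal_gen ?K"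
  proof -
    have e2: "(Var 2 * (Var 1 * Var 2 - Var 3 * Var 4)) = Var 1 * Var 2 ^ 2 + (- Var 4) * (Var 2 * Var 3)" by (simp add: algebra_simps power2_eq_square)
    have e3: "(Var 3 * (Var 1 * Var 2 - Var 3 * Var 4)) = Var 1 * (Var 2 * Var 3) + (- Var 4) * Var 3 ^ 2" by (simp add: algebra_simps power2_eq_square)
    have "(Var 2 * (Var 1 * Var 2 - Var 3 * Var 4)) \<in> ideal_gen ?K" by (subst e2) (intro ig_add ig_mem; simp)
    moreover have "(Var 3 * (Var 1 * Var 2 - Var 3 * Var 4)) \<in> ideal_gen ?K" by (subst e3) (intro ig_add ig_mem; simp)
    ultimately show ?thesis by blast
  qed
  have eq: "point_scheme (coeffs_A q) = Vsch ?J"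
    unfolding point_scheme_def Vsch_def
  proof
    show "saturation (ideal_gen ?M) \<subseteq> saturation (ideal_gen ?J)"
      by (rule sat_mono, rule ig_subset, rule MJ)
    show "saturation (ideal_gen ?J) \<subseteq> saturation (ideal_gen ?M)"
      by (rule sat_var, rule ig_var, rule JM) auto
  qed
  moreover have "Vsch ?J \<subseteq> Vsch ?K"
    unfolding Vsch_def by (rule sat_mono, rule ig_subset, rule JK)
  ultimately show ?thesis by simp
qed
end
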